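(* For every even integer $n\ge 4$ there exist a boolean classifier $\kappa:\{0,1\}^n\to\{0,1\}$ and a point $\mathbf v\in\{0,1\}^n$ such that, for the sample $(\mathbf v,\kappa(\mathbf v))$, there exist an irrelevant feature $i_1\in\mathcal F$ with $\mathrm{Sv}(i_1)\neq 0$ and a relevant feature $i_2\in\mathcal F\setminus\{i_1\}$ with $\mathrm{Sv}(i_2)=0$ (issue I4).
   Context: Let $\mathcal F=\{1,\dots,n\}$. A boolean classifier is a non-constant function $\kappa:\{0,1\}^n\to\{0,1\}$; a sample is a pair $(\mathbf v,c)$ with $\mathbf v\in\{0,1\}^n$ and $c=\kappa(\mathbf v)$. For $\mathcal S\subseteq\mathcal F$ let $\Upsilon(\mathcal S;\mathbf v)=\{\mathbf x\in\{0,1\}^n : x_j=v_j \text{ for all } j\in\mathcal S\}$ and, for any function $g$ on $\{0,1\}^n$, $\mathbf E[g\mid \mathbf x_{\mathcal S}=\mathbf v_{\mathcal S}]=|\Upsilon(\mathcal S;\mathbf v)|^{-1}\sum_{\mathbf x\in\Upsilon(\mathcal S;\mathbf v)}g(\mathbf x)$ (uniform distribution, independent features). The characteristic function is $\upsilon(\mathcal S)=\mathbf E[\kappa\mid\mathbf x_{\mathcal S}=\mathbf v_{\mathcal S}]$, and the SHAP score of feature $i$ is $\mathrm{Sv}(i)=\sum_{\mathcal S\subseteq\mathcal F\setminus\{i\}}\frac{|\mathcal S|!\,(n-|\mathcal S|-1)!}{n!}\big(\upsilon(\mathcal S\cup\{i\})-\upsilon(\mathcal S)\big)$. The similarity predicate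 is $\sigma(\mathbf x)=1$ if $\kappa(\mathbf x)=\kappa(\mathbf v)$ and $0$ otherwise. A set $\mathcal S\subseteq\mathcal F$ is a weak abductive explanation (WAXp) if $\mathbf E[\sigma\mid\mathbf x_{\mathcal S}=\mathbf v_{\mathcal S}]=1$ (i.e. $\kappa(\mathbf x)=\kappa(\mathbf v)$ for all $\mathbf x\in\Upsilon(\mathcal S;\mathbf v)$); an abductive explanation (AXp) is a WAXp $\mathcal S$ such that $\mathcal S\setminus\{t\}$ is not a WAXp for every $t\in\mathcal S$. A feature is relevant if it belongs to at least one AXp, and irrelevant otherwise. *)

theory Defs
  imports Complex_Main
begin

text \<open>A point of {0,1}^n is a function nat => bool which is
  False outside {1..n} (so the set of points is in bijection with {0,1}^n).
  A classifier is a function on points returning bool (True = 1, False = 0).\<close>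

definition points :: "nat \<Rightarrow> (nat \<Rightarrow> bool) set" where
  "points n = {x. \<forall>j. j \<notin> {1..n} \<longrightarrow> x j = False}"

definition feats :: "nat \<Rightarrow> nat set" where
  "feats n = {1..n}"

definition is_classifier :: "nat \<Rightarrow> ((nat \<Rightarrow> bool) \<Rightarrow> bool) \<Rightarrow> bool" where
  "is_classifier n \<kappa> \<longleftrightarrow> (\<exists>x\<in>points n. \<exists>y\<in>points n. \<kappa> x \<noteq> \<kappa> y)"

definition Upsilon :: "nat \<Rightarrow> nat set \<Rightarrow> (nat \<Rightarrow> bool) \<Rightarrow> (nat \<Rightarrow> bool) set" where
  "Upsilon n S v = {x \<in> points n. \<forall>j\<in>S. x j = v j}"

definition cond_exp :: "nat \<Rightarrow> ((nat \<Rightarrow> bool) \<Rightarrow> real) \<Rightarrow> nat set \<Rightarrow> (nat \<Rightarrow> bool) \<Rightarrow> real" where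
  "cond_exp n g S v = (\<Sum>x\<in>Upsilon n S v. g x) / real (card (Upsilon n S v))"

definition charfun :: "nat \<Rightarrow> ((nat \<Rightarrow> bool) \<Rightarrow> bool) \<Rightarrow> (nat \<Rightarrow> bool) \<Rightarrow> nat set \<Rightarrow> real" where
  "charfun n \<kappa> v S = cond_exp n (\<lambda>x. of_bool (\<kappa> x)) S v"

definition shap :: "nat \<Rightarrow> ((nat \<Rightarrow> bool) \<Rightarrow> bool) \<Rightarrow> (nat \<Rightarrow> bool) \<Rightarrow> nat \<Rightarrow> real" where
  "shap n \<kappa> v i = (\<Sum>S\<in>Pow (feats n - {i}).
     (fact (card S) * fact (n - card S - 1) / fact n) *
     (charfun n \<kappa> v (S \<union> {i}) - charfun n \<kappa> v S))"

definition sigma :: "((nat \<Rightarrow> bool) \<Rightarrow> bool) \<Rightarrow> (nat \<Rightarrow> bool) \<Rightarrow> (nat \<Rightarrow> bool) \<Rightarrow> real" where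
  "sigma \<kappa> v x = (if \<kappa> x = \<kappa> v then 1 else 0)"

definition WAXp :: "nat \<Rightarrow> ((nat \<Rightarrow> bool) \<Rightarrow> bool) \<Rightarrow> (nat \<Rightarrow> bool) \<Rightarrow> nat set \<Rightarrow> bool" where
  "WAXp n \<kappa> v S \<longleftrightarrow> S \<subseteq> feats n \<and> cond_exp n (sigma \<kappa> v) S v = 1"

definition AXp :: "nat \<Rightarrow> ((nat \<Rightarrow> bool) \<Rightarrow> bool) \<Rightarrow> (nat \<Rightarrow> bool) \<Rightarrow> nat set \<Rightarrow> bool" where
  "AXp n \<kappa> v S \<longleftrightarrow> WAXp n \<kappa> v S \<and> (\<forall>t\<in>S. \<not> WAXp n \<kappa> v (S - {t}))"

definition relevant :: "nat \<Rightarrow> ((nat \<Rightarrow> bool) \<Rightarrow> bool) \<Rightarrow> (nat \<Rightarrow> bool) \<Rightarrow> nat \<Rightarrow> bool" where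
  "relevant n \<kappa> v i \<longleftrightarrow> (\<exists>S. AXp n \<kappa> v S \<and> i \<in> S)"

end

theory Submission imports Defs begin

lemma points_eq: "points n = (\<lambda>B j. j \<in> B) ` Pow {1..n}"
proof
  show "points n \<subseteq> (\<lambda>B j. j \<in> B) ` Pow {1..n}"
  proof
    fix x assume x: "x \<in> points n"
    have "x = (\<lambda>j. j \<in> {j. x j})" by auto
    moreover have "{j. x j} \<subseteq> {1..n}" using x unfolding points_def by auto
    ultimately show "x \<in> (\<lambda>B j. j \<in> B) ` Pow {1..n}" by blast
  qed
qed (auto simp: points_def)

lemma finite_points: "finite (points n)"
  unfolding points_eq by simp

lemma finite_Upsilon: "finite (Upsilon n S v)"
  unfolding Upsilon_def using finite_points by simp

lemma v_in_Upsilon: "v \<in> points n \<Longrightarrow> v \<in> Upsilon n S v"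
  unfolding Upsilon_def by simp

lemma WAXp_iff:
  assumes "v \<in> points n"
  shows "WAXp n \<kappa> v S \<longleftrightarrow> S \<subseteq> feats n \<and> (\<forall>x\<in>Upsilon n S v. \<kappa> x = \<kappa> v)"
proof -
  let ?U = "Upsilon n S v"
  have fin: "finite ?U" by (rule finite_Upsilon)
  have ne: "card ?U > 0" using fin v_in_Upsilon[OF assms] card_gt_0_iff by blast
  have "cond_exp n (sigma \<kappa> v) S v = 1 \<longleftrightarrow> (\<Sum>x\<in>?U. sigma \<kappa> v x) = real (card ?U)"
    unfolding cond_exp_def using ne by (auto simp add: divide_eq_1_iff)
  also have "\<dots> \<longleftrightarrow> (\<Sum>x\<in>?U. 1 - sigma \<kappa> v x) = 0"
    by (auto simp add: sum_subtractf)
  also have "\<dots> \<longleftrightarrow> (\<forall>x\<in>?U. 1 - sigma \<kappa> v x = 0)"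
    using fin by (intro sum_nonneg_eq_0_iff) (auto simp: sigma_def)
  also have "\<dots> \<longleftrightarrow> (\<forall>x\<in>?U. \<kappa> x = \<kappa> v)"
    by (auto simp: sigma_def)
  finally show ?thesis unfolding WAXp_def by blast
qed

lemma charfun_local:
  assumes K: "K \<subseteq> {1..n}" and kap: "\<And>x. \<kappa> x = kp {j\<in>K. x j}"
  shows "charfun n \<kappa> (\<lambda>_. False) S = real (card {C. C \<subseteq> K - S \<and> kp C}) / 2 ^ card (K - S)"
proof -
  define A where "A = {1..n} - S"
  have finA: "finite A" unfolding A_def by simp
  let ?f = "\<lambda>B j. j \<in> (B::nat set)"
  have U: "Upsilon n S (\<lambda>_. False) = ?f ` Pow A"
    unfolding Upsilon_def points_eq A_def by auto
  have inj: "inj_on ?f (Pow A)"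
    by (auto simp: inj_on_def fun_eq_iff)
  have cardU: "card (Upsilon n S (\<lambda>_. False)) = 2 ^ card A"
    unfolding U using card_image[OF inj] finA by (simp add: card_Pow)
  have "(\<Sum>x\<in>Upsilon n S (\<lambda>_. False). of_bool (\<kappa> x) :: real) = (\<Sum>B\<in>Pow A. of_bool (kp (B \<inter> K)))"
    unfolding U sum.reindex[OF inj] by (simp add: kap Int_def conj_commute)
  also have "\<dots> = real (card {B \<in> Pow A. kp (B \<inter> K)})"
    using finA by (subst sum_of_bool_eq) (simp_all add: Int_def)
  finally have sumeq: "(\<Sum>x\<in>Upsilon n S (\<lambda>_. False). of_bool (\<kappa> x) :: real) = real (card {B \<in> Pow A. kp (B \<inter> K)})" .
  have AK: "A \<inter> K = K - S" using K unfolding A_def by auto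
  have bij: "bij_betw (\<lambda>B. (B \<inter> K, B - K)) {B \<in> Pow A. kp (B \<inter> K)} ({C. C \<subseteq> K - S \<and> kp C} \<times> Pow (A - K))"
  proof (rule bij_betw_byWitness[where f' = "\<lambda>(C, E). C \<union> E"])
    show "\<forall>a\<in>{B \<in> Pow A. kp (B \<inter> K)}. (\<lambda>(C, E). C \<union> E) (a \<inter> K, a - K) = a" by auto
    show "\<forall>a'\<in>{C. C \<subseteq> K - S \<and> kp C} \<times> Pow (A - K). (\<lambda>B. (B \<inter> K, B - K)) ((\<lambda>(C, E). C \<union> E) a') = a'"
      by auto
    show "(\<lambda>B. (B \<inter> K, B - K)) ` {B \<in> Pow A. kp (B \<inter> K)} \<subseteq> {C. C \<subseteq> K - S \<and> kp C} \<times> Pow (A - K)"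
      using AK by auto
    show "(\<lambda>(C, E). C \<union> E) ` ({C. C \<subseteq> K - S \<and> kp C} \<times> Pow (A - K)) \<subseteq> {B \<in> Pow A. kp (B \<inter> K)}"
    proof
      fix B assume "B \<in> (\<lambda>(C, E). C \<union> E) ` ({C. C \<subseteq> K - S \<and> kp C} \<times> Pow (A - K))"
      then obtain C E where B: "B = C \<union> E" and C: "C \<subseteq> K - S" "kp C" and E: "E \<subseteq> A - K" by auto
      have "B \<inter> K = C" using B C E by auto
      moreover have "B \<subseteq> A" using B C E AK by auto
      ultimately show "B \<in> {B \<in> Pow A. kp (B \<inter> K)}" using C by auto
    qed
  qed
  have finK: "finite (K - S)" using K finite_subset by blast
  have "card {B \<in> Pow A. kp (B \<inter> K)} = card {C. C \<subseteq> K - S \<and> kp C} * 2 ^ card (A - K)"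
    using bij_betw_same_card[OF bij] finA finK by (simp add: card_cartesian_product card_Pow)
  moreover have "card A = card (K - S) + card (A - K)"
  proof -
    have "A = (A \<inter> K) \<union> (A - K)" by auto
    hence "card A = card (A \<inter> K) + card (A - K)"
      using finA by (metis card_Un_disjoint Diff_disjoint Int_Diff_disjoint finite_Diff finite_Int)
    thus ?thesis using AK by simp
  qed
  ultimately show ?thesis
    unfolding charfun_def cond_exp_def sumeq cardU by (simp add: power_add)
qed


definition kp :: "nat set \<Rightarrow> bool" where
  "kp C \<longleftrightarrow> 2 \<notin> C \<and> ((1 \<notin> C \<and> 3 \<in> C \<and> 4 \<in> C) \<or> (1 \<in> C \<and> 3 \<notin> C \<and> 4 \<notin> C))"

definition kap :: "(nat \<Rightarrow> bool) \<Rightarrow> bool" where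
  "kap x = kp {j\<in>{1,2,3,4}. x j}"

definition nb :: "bool \<Rightarrow> nat" where "nb b = (if b then 0 else 1)"

definition cfb :: "bool \<Rightarrow> bool \<Rightarrow> bool \<Rightarrow> bool \<Rightarrow> real" where
  "cfb a b c d = (of_bool (\<not> c \<and> \<not> d) + of_bool (\<not> a)) / 2 ^ (nb a + nb b + nb c + nb d)"

lemma count_kp:
  assumes "R \<subseteq> {1,2,3,4}"
  shows "card {C. C \<subseteq> R \<and> kp C} = of_bool (3 \<in> R \<and> 4 \<in> R) + of_bool (1 \<in> R)"
proof -
  have "{C. C \<subseteq> R \<and> kp C} = (if 3 \<in> R \<and> 4 \<in> R then {{3,4}} else {}) \<union> (if 1 \<in> R then {{1}} else {})"
  proof (intro equalityI subsetI)
    fix C assume "C \<in> {C. C \<subseteq> R \<and> kp C}"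
    hence C: "C \<subseteq> {1,2,3,4}" "C \<subseteq> R" "kp C" using assms by auto
    show "C \<in> (if 3 \<in> R \<and> 4 \<in> R then {{3,4}} else {}) \<union> (if 1 \<in> R then {{1}} else {})"
    proof (cases "1 \<in> C")
      case True
      hence "C = {1}" using C unfolding kp_def by auto
      thus ?thesis using C by auto
    next
      case False
      hence "C = {3,4}" using C unfolding kp_def by auto
      thus ?thesis using C by auto
    qed
  qed (auto split: if_splits simp: kp_def)
  thus ?thesis by simp
qed

lemma card_K_minus:
  "card ({1,2,3,4::nat} - S) = nb (1 \<in> S) + nb (2 \<in> S) + nb (3 \<in> S) + nb (4 \<in> S)"
proof -
  have "card ({1,2,3,4::nat} - S) = card ({1,2,3,4::nat} \<inter> {j. j \<notin> S})" by (simp add: Diff_eq Compl_eq)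
  also have "\<dots> = (\<Sum>j\<in>{1,2,3,4::nat}. of_bool (j \<notin> S))" by simp
  also have "\<dots> = nb (1 \<in> S) + nb (2 \<in> S) + nb (3 \<in> S) + nb (4 \<in> S)" by (simp add: nb_def)
  finally show ?thesis .
qed

lemma charfun_kap:
  assumes "n \<ge> 4"
  shows "charfun n kap (\<lambda>_. False) S = cfb (1 \<in> S) (2 \<in> S) (3 \<in> S) (4 \<in> S)"
proof -
  have K: "{1,2,3,4::nat} \<subseteq> {1..n}" using assms by auto
  have "charfun n kap (\<lambda>_. False) S = real (card {C. C \<subseteq> {1,2,3,4} - S \<and> kp C}) / 2 ^ card ({1,2,3,4} - S)"
    by (rule charfun_local[OF K]) (simp add: kap_def)
  also have "\<dots> = cfb (1 \<in> S) (2 \<in> S) (3 \<in> S) (4 \<in> S)"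
    unfolding card_K_minus by (subst count_kp) (auto simp: cfb_def)
  finally show ?thesis .
qed


lemma cfb2_nonneg: "cfb a True c d - cfb a False c d \<ge> 0"
  by (cases a; cases c; cases d) (simp_all add: cfb_def nb_def)

lemma cfb3_anti: "(cfb a b True d - cfb a b False d) + (cfb d b True a - cfb d b False a) = 0"
  by (cases a; cases b; cases d) (simp_all add: cfb_def nb_def)

definition sw :: "nat \<Rightarrow> nat" where
  "sw j = (if j = 1 then 4 else if j = 4 then 1 else j)"

lemma sw_sw [simp]: "sw (sw j) = j" by (simp add: sw_def)

lemma mem_sw: "x \<in> sw ` S \<longleftrightarrow> sw x \<in> S"
  by (metis image_iff sw_sw)

lemma inj_sw: "inj sw" by (metis injI sw_sw)

lemma weight_pos: "(fact k * fact m / fact n :: real) > 0"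
  by (simp add: fact_gt_zero)

lemma shap2:
  assumes "n \<ge> 4"
  shows "shap n kap (\<lambda>_. False) 2 > 0"
proof -
  let ?w = "\<lambda>S::nat set. (fact (card S) * fact (n - card S - 1) / fact n :: real)"
  let ?f = "\<lambda>S. ?w S * (charfun n kap (\<lambda>_. False) (S \<union> {2}) - charfun n kap (\<lambda>_. False) S)"
  have eq: "?f S = ?w S * (cfb (1 \<in> S) True (3 \<in> S) (4 \<in> S) - cfb (1 \<in> S) False (3 \<in> S) (4 \<in> S))"
    if "S \<in> Pow (feats n - {2})" for S
    using that by (subgoal_tac "2 \<notin> S") (auto simp add: charfun_kap[OF assms])
  have "0 < sum ?f (Pow (feats n - {2}))"
  proof (rule sum_pos2[where i = "{}"])
    show "finite (Pow (feats n - {2}))" by (simp add: feats_def)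
    show "{} \<in> Pow (feats n - {2})" by simp
    show "0 < ?f {}" using eq[of "{}"] weight_pos
      by (simp add: cfb_def nb_def)
    show "0 \<le> ?f S" if "S \<in> Pow (feats n - {2})" for S
      using eq[OF that] weight_pos cfb2_nonneg by (simp add: less_imp_le)
  qed
  thus ?thesis unfolding shap_def .
qed

lemma shap3:
  assumes "n \<ge> 4"
  shows "shap n kap (\<lambda>_. False) 3 = 0"
proof -
  let ?w = "\<lambda>S::nat set. (fact (card S) * fact (n - card S - 1) / fact n :: real)"
  let ?f = "\<lambda>S. ?w S * (charfun n kap (\<lambda>_. False) (S \<union> {3}) - charfun n kap (\<lambda>_. False) S)"
  let ?P = "Pow (feats n - {3})"
  have eq: "?f S = ?w S * (cfb (1 \<in> S) (2 \<in> S) True (4 \<in> S) - cfb (1 \<in> S) (2 \<in> S) False (4 \<in> S))"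
    if "S \<in> ?P" for S
    using that by (subgoal_tac "3 \<notin> S") (auto simp add: charfun_kap[OF assms])
  have hP: "sw ` S \<in> ?P" if "S \<in> ?P" for S
  proof -
    have "sw j \<in> feats n - {3}" if "j \<in> feats n - {3}" for j
      using that assms by (auto simp: sw_def feats_def)
    thus ?thesis using that by auto
  qed
  have anti: "?f (sw ` S) = - ?f S" if S: "S \<in> ?P" for S
  proof -
    have c: "card (sw ` S) = card S" using inj_sw by (simp add: card_image inj_on_subset)
    have "?f (sw ` S) = ?w S * (cfb (4 \<in> S) (2 \<in> S) True (1 \<in> S) - cfb (4 \<in> S) (2 \<in> S) False (1 \<in> S))"
    proof -
      have m: "(1 \<in> sw ` S) = (4 \<in> S)" "(2 \<in> sw ` S) = (2 \<in> S)" "(4 \<in> sw ` S) = (1 \<in> S)"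
        unfolding mem_sw by (simp_all add: sw_def)
      show ?thesis using eq[OF hP[OF S]] unfolding m c .
    qed
    also have "\<dots> = - ?f S"
    proof -
      have d: "cfb (4 \<in> S) (2 \<in> S) True (1 \<in> S) - cfb (4 \<in> S) (2 \<in> S) False (1 \<in> S)
          = - (cfb (1 \<in> S) (2 \<in> S) True (4 \<in> S) - cfb (1 \<in> S) (2 \<in> S) False (4 \<in> S))"
        using cfb3_anti[of "1 \<in> S" "2 \<in> S" "4 \<in> S"] by linarith
      show ?thesis unfolding eq[OF S] d by (rule mult_minus_right)
    qed
    finally show ?thesis .
  qed
  have swsw: "sw ` (sw ` S) = S" for S by (simp add: image_image)
  have "sum ?f ?P = sum (\<lambda>S. ?f (sw ` S)) ?P"
    by (rule sum.reindex_bij_witness[where i = "\<lambda>S. sw ` S" and j = "\<lambda>S. sw ` S"])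
       (simp_all only: swsw hP)
  also have "\<dots> = sum (\<lambda>S. - ?f S) ?P"
    by (rule sum.cong[OF refl]) (rule anti)
  also have "\<dots> = - sum ?f ?P" by (rule sum_negf)
  finally have "sum ?f ?P = 0" by simp
  thus ?thesis unfolding shap_def .
qed


theorem proposition3:
  fixes n :: nat
  assumes "even n" and "n \<ge> 4"
  shows "\<exists>\<kappa> v. is_classifier n \<kappa> \<and> v \<in> points n \<and>
           (\<exists>i1\<in>feats n. \<not> relevant n \<kappa> v i1 \<and> shap n \<kappa> v i1 \<noteq> 0 \<and>
              (\<exists>i2\<in>feats n - {i1}. relevant n \<kappa> v i2 \<and> shap n \<kappa> v i2 = 0))"
proof -
  note n4 = assms(2)
  let ?v = "\<lambda>_::nat. False"
  have vp: "?v \<in> points n" by (simp add: points_def)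
  have kv: "\<not> kap ?v" by (simp add: kap_def kp_def)
  have p1: "(\<lambda>j. j = 1) \<in> points n" using n4 by (auto simp: points_def)
  have k1: "kap (\<lambda>j. j = 1)" by (simp add: kap_def kp_def)
  have p34: "(\<lambda>j. j = 3 \<or> j = 4) \<in> points n" using n4 by (auto simp: points_def)
  have k34: "kap (\<lambda>j. j = 3 \<or> j = 4)" by (simp add: kap_def kp_def)
  have cls: "is_classifier n kap" unfolding is_classifier_def using vp p1 kv k1 by blast
  have f2: "2 \<in> feats n" and f3: "3 \<in> feats n" and f1: "1 \<in> feats n"
    using n4 by (auto simp: feats_def)
  have irr: "\<not> relevant n kap ?v 2"
  proof
    assume "relevant n kap ?v 2"
    then obtain S where ax: "AXp n kap ?v S" and "2 \<in> S" unfolding relevant_def by blast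
    hence w: "WAXp n kap ?v S" and nw: "\<not> WAXp n kap ?v (S - {2})" unfolding AXp_def by auto
    have "WAXp n kap ?v (S - {2})"
      unfolding WAXp_iff[OF vp]
    proof
      show "S - {2} \<subseteq> feats n" using w WAXp_iff[OF vp] by auto
      show "\<forall>x\<in>Upsilon n (S - {2}) ?v. kap x = kap ?v"
      proof
        fix x assume x: "x \<in> Upsilon n (S - {2}) ?v"
        show "kap x = kap ?v"
        proof (cases "x 2")
          case True
          thus ?thesis using kv by (simp add: kap_def kp_def)
        next
          case False
          hence "x \<in> Upsilon n S ?v" using x unfolding Upsilon_def by auto
          thus ?thesis using w WAXp_iff[OF vp] by blast
        qed
      qed
    qed
    with nw show False by contradiction
  qed
  have rel: "relevant n kap ?v 3"
  proof -
    have "WAXp n kap ?v {1,3}"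
      unfolding WAXp_iff[OF vp] using f1 f3 by (auto simp: Upsilon_def kap_def kp_def)
    moreover have "\<not> WAXp n kap ?v {3}"
    proof
      assume "WAXp n kap ?v {3}"
      moreover have "(\<lambda>j. j = 1) \<in> Upsilon n {3} ?v" using p1 by (simp add: Upsilon_def)
      ultimately show False using k1 kv WAXp_iff[OF vp] by blast
    qed
    moreover have "\<not> WAXp n kap ?v {1}"
    proof
      assume "WAXp n kap ?v {1}"
      moreover have "(\<lambda>j. j = 3 \<or> j = 4) \<in> Upsilon n {1} ?v" using p34 by (simp add: Upsilon_def)
      ultimately show False using k34 kv WAXp_iff[OF vp] by blast
    qed
    ultimately have "AXp n kap ?v {1,3}" unfolding AXp_def
      by (auto simp: insert_Diff_if)
    thus ?thesis unfolding relevant_def by blast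
  qed
  have "shap n kap ?v 2 \<noteq> 0" using shap2[OF n4] by simp
  moreover have "shap n kap ?v 3 = 0" using shap3[OF n4] .
  moreover have "3 \<in> feats n - {2}" using f3 by simp
  ultimately show ?thesis using cls vp f2 irr rel by blast
qed

thm_deps proposition3

end
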